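(* Let $E=\mathcal O_{\mathbb P^1}(a)\oplus\mathcal O_{\mathbb P^1}(b)$ with $a,b\ge1$. Then $\mathrm{Gr}_2(H^0(E))\cap\mathbb{P}K^\perp$ is a transversal intersection if and only if $a=b=1$.
   Context: $K^\perp:=\ker(\det:\bigwedge^2H^0(E)\to H^0(\det E))$, and $\mathrm{Gr}_2(H^0(E))\subset\mathbb{P}(\bigwedge^2H^0(E))$ is the Plücker embedding. Two smooth subvarieties $S_1,S_2\subset\mathbb P^N$ intersect transversely if $T_pS_1+T_pS_2=T_p\mathbb P^N$ for every $p\in S_1\cap S_2$. *)

theory Defs
  imports "HOL-Analysis.Analysis" "HOL-Computational_Algebra.Polynomial"
begin

(* H^0(E) for E = O(a) + O(b) on P^1 over C, in the affine chart: pairs (f,g) of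
   polynomials with deg f <= a, deg g <= b (homogeneous forms of degree a, b dehomogenised). *)
definition sections :: "nat \<Rightarrow> nat \<Rightarrow> (complex poly \<times> complex poly) set" where
  "sections a b = {(f, g). degree f \<le> a \<and> degree g \<le> b}"

(* coordinates of a section w.r.t. the monomial basis: indices 0..a are the
   coefficients of f, indices a+1..a+b+1 those of g; dim H^0(E) = a+b+2 *)
definition coord :: "nat \<Rightarrow> complex poly \<times> complex poly \<Rightarrow> nat \<Rightarrow> complex" where
  "coord a s i = (if i \<le> a then coeff (fst s) i else coeff (snd s) (i - (a + 1)))"

(* \<And>^2 H^0(E), realised as alternating matrices in these coordinates *)
definition wedge2 :: "nat \<Rightarrow> nat \<Rightarrow> (nat \<Rightarrow> nat \<Rightarrow> complex) set" where
  "wedge2 a b = {M. (\<forall>i j. M i j = - M j i) \<and>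
                    (\<forall>i j. (a + b + 2 \<le> i \<or> a + b + 2 \<le> j) \<longrightarrow> M i j = 0)}"

definition wedge :: "(nat \<Rightarrow> complex) \<Rightarrow> (nat \<Rightarrow> complex) \<Rightarrow> nat \<Rightarrow> nat \<Rightarrow> complex" where
  "wedge v w = (\<lambda>i j. v i * w j - w i * v j)"

(* det : \<And>^2 H^0(E) \<rightarrow> H^0(det E) = H^0(O(a+b)), the linear map with
   (f1,g1) \<and> (f2,g2) \<mapsto> f1 g2 - f2 g1; value given as coefficient sequence *)
definition detmap :: "nat \<Rightarrow> nat \<Rightarrow> (nat \<Rightarrow> nat \<Rightarrow> complex) \<Rightarrow> nat \<Rightarrow> complex" where
  "detmap a b M k = (\<Sum>i\<le>a. \<Sum>j\<le>b. if i + j = k then M i (a + 1 + j) else 0)"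

(* affine cone over Gr_2(H^0(E)) in its Pluecker embedding *)
definition gr_cone :: "nat \<Rightarrow> nat \<Rightarrow> (nat \<Rightarrow> nat \<Rightarrow> complex) set" where
  "gr_cone a b = {wedge (coord a s) (coord a t) | s t. s \<in> sections a b \<and> t \<in> sections a b}"

(* K^perp = ker det, the affine cone over P K^perp *)
definition K_perp :: "nat \<Rightarrow> nat \<Rightarrow> (nat \<Rightarrow> nat \<Rightarrow> complex) set" where
  "K_perp a b = {M \<in> wedge2 a b. \<forall>k. detmap a b M k = 0}"

(* embedded (affine-cone) tangent space of a set S at p: velocities at 0 of
   complex-differentiable curves lying in S and passing through p *)
definition tangent_space :: "(nat \<Rightarrow> nat \<Rightarrow> complex) set \<Rightarrow> (nat \<Rightarrow> nat \<Rightarrow> complex)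
      \<Rightarrow> (nat \<Rightarrow> nat \<Rightarrow> complex) set" where
  "tangent_space S p = {D. \<exists>\<gamma>::complex \<Rightarrow> nat \<Rightarrow> nat \<Rightarrow> complex.
       \<gamma> 0 = p \<and> (\<forall>t. \<gamma> t \<in> S) \<and>
       (\<forall>i j. ((\<lambda>t. \<gamma> t i j) has_field_derivative D i j) (at 0))}"

definition transversal_Gr_K :: "nat \<Rightarrow> nat \<Rightarrow> bool" where
  "transversal_Gr_K a b =
     (\<forall>p \<in> gr_cone a b \<inter> K_perp a b. p \<noteq> (\<lambda>i j. 0) \<longrightarrow>
        {(\<lambda>i j. x i j + y i j) | x y. x \<in> tangent_space (gr_cone a b) p \<and> y \<in> tangent_space (K_perp a b) p}
          = wedge2 a b)"

end

theory Submission
  imports Defs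
begin

definition ev :: "nat \<Rightarrow> nat \<Rightarrow> complex" where
  "ev k = (\<lambda>i. if i = k then 1 else 0)"

lemma pluecker:
  "wedge v w i j * wedge v w k l - wedge v w i k * wedge v w j l + wedge v w i l * wedge v w j k = 0"
  unfolding wedge_def by algebra

lemma detmap_top:
  "detmap a b M (a + b) = M a (a + 1 + b)"
proof -
  have inner: "(\<Sum>j\<le>b. if i + j = a + b then M i (a + 1 + j) else 0) = (if i = a then M a (a + 1 + b) else 0)"
    if "i \<le> a" for i
  proof (cases "i = a")
    case True
    then show ?thesis by simp
  next
    case False
    then have "\<forall>j\<in>{..b}. (if i + j = a + b then M i (a + 1 + j) else 0) = 0"
      using that by auto
    then show ?thesis using False by (simp add: sum.neutral)
  qed
  show ?thesis unfolding detmap_def by (simp add: inner)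
qed

lemma detmap11:
  "detmap 1 1 M k = (if k = 0 then M 0 2 else if k = 1 then M 0 3 + M 1 2 else if k = 2 then M 1 3 else 0)"
proof -
  have e: "{..1::nat} = {0,1}" by auto
  show ?thesis unfolding detmap_def e by (auto simp: numeral_3_eq_3 numeral_2_eq_2)
qed

lemma tangent_const0:
  assumes "D \<in> tangent_space S p" "\<And>M. M \<in> S \<Longrightarrow> M i j = 0"
  shows "D i j = 0"
proof -
  obtain \<gamma> where g: "\<gamma> 0 = p" "\<forall>t. \<gamma> t \<in> S" "\<forall>i j. ((\<lambda>t. \<gamma> t i j) has_field_derivative D i j) (at 0)"
    using assms(1) unfolding tangent_space_def by blast
  have "(\<lambda>t. \<gamma> t i j) = (\<lambda>t. 0)" using g(2) assms(2) by auto
  then have "((\<lambda>t. 0::complex) has_field_derivative D i j) (at 0)" using g(3) by metis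
  then show ?thesis using DERIV_const DERIV_unique by blast
qed

lemma tangent_wedge2:
  assumes "D \<in> tangent_space S p" "S \<subseteq> wedge2 a b"
  shows "D \<in> wedge2 a b"
proof -
  obtain \<gamma> where g: "\<gamma> 0 = p" "\<forall>t. \<gamma> t \<in> S" "\<forall>i j. ((\<lambda>t. \<gamma> t i j) has_field_derivative D i j) (at 0)"
    using assms(1) unfolding tangent_space_def by blast
  have anti: "D i j = - D j i" for i j
  proof -
    have "(\<lambda>t. \<gamma> t i j) = (\<lambda>t. - \<gamma> t j i)"
    proof
      fix t
      have "\<gamma> t \<in> wedge2 a b" using g(2) assms(2) by blast
      then show "\<gamma> t i j = - \<gamma> t j i" unfolding wedge2_def by blast
    qed
    moreover have "((\<lambda>t. - \<gamma> t j i) has_field_derivative - D j i) (at 0)"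
      using g(3) by (intro DERIV_minus) auto
    ultimately have "((\<lambda>t. \<gamma> t i j) has_field_derivative - D j i) (at 0)" by simp
    then show ?thesis using g(3) DERIV_unique by blast
  qed
  have z: "D i j = 0" if "a + b + 2 \<le> i \<or> a + b + 2 \<le> j" for i j
  proof (rule tangent_const0[OF assms(1)])
    fix M assume "M \<in> S"
    then have "M \<in> wedge2 a b" using assms(2) by blast
    then have "\<forall>i j. (a + b + 2 \<le> i \<or> a + b + 2 \<le> j) \<longrightarrow> M i j = 0" unfolding wedge2_def by blast
    then show "M i j = 0" using that by blast
  qed
  show ?thesis unfolding wedge2_def using anti z by blast
qed

lemma tangent_pluecker:
  assumes "D \<in> tangent_space (gr_cone a b) (wedge (ev i) (ev j))"
    and "i \<noteq> j" "i \<noteq> k" "i \<noteq> l" "j \<noteq> k" "j \<noteq> l" "k \<noteq> l"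
  shows "D k l = 0"
proof -
  obtain \<gamma> where g: "\<gamma> 0 = wedge (ev i) (ev j)" "\<forall>t. \<gamma> t \<in> gr_cone a b"
    "\<forall>i j. ((\<lambda>t. \<gamma> t i j) has_field_derivative D i j) (at 0)"
    using assms(1) unfolding tangent_space_def by blast
  define \<phi> where "\<phi> t = \<gamma> t i j * \<gamma> t k l - \<gamma> t i k * \<gamma> t j l + \<gamma> t i l * \<gamma> t j k" for t
  have "\<phi> = (\<lambda>t. 0)"
  proof
    fix t
    obtain v w where "\<gamma> t = wedge v w" using g(2) unfolding gr_cone_def by blast
    then show "\<phi> t = 0" unfolding \<phi>_def using pluecker by metis
  qed
  moreover have "(\<phi> has_field_derivative
      (D i j * \<gamma> 0 k l + D k l * \<gamma> 0 i j) - (D i k * \<gamma> 0 j l + D j l * \<gamma> 0 i k)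
      + (D i l * \<gamma> 0 j k + D j k * \<gamma> 0 i l)) (at 0)"
    unfolding \<phi>_def using g(3)
    by (intro DERIV_add DERIV_diff DERIV_mult) auto
  ultimately have "((\<lambda>t. 0) has_field_derivative
      (D i j * \<gamma> 0 k l + D k l * \<gamma> 0 i j) - (D i k * \<gamma> 0 j l + D j l * \<gamma> 0 i k)
      + (D i l * \<gamma> 0 j k + D j k * \<gamma> 0 i l)) (at 0)" by simp
  then have "(D i j * \<gamma> 0 k l + D k l * \<gamma> 0 i j) - (D i k * \<gamma> 0 j l + D j l * \<gamma> 0 i k)
      + (D i l * \<gamma> 0 j k + D j k * \<gamma> 0 i l) = 0"
    using DERIV_const DERIV_unique by blast
  moreover have "wedge (ev i) (ev j) i j = 1" "wedge (ev i) (ev j) k l = 0"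
    "wedge (ev i) (ev j) j l = 0" "wedge (ev i) (ev j) i k = 0"
    "wedge (ev i) (ev j) j k = 0" "wedge (ev i) (ev j) i l = 0"
    using assms(2-) unfolding wedge_def ev_def by auto
  ultimately show ?thesis unfolding g(1) by simp
qed

lemma solve2:
  fixes s0 s1 t0 t1 c0 c1 c2 :: complex
  assumes d: "s0 * t1 - s1 * t0 \<noteq> 0"
  shows "\<exists>l m n r. l * s0 + m * t0 = c0 \<and> l * s1 + m * t1 + n * s0 + r * t0 = c1 \<and> n * s1 + r * t1 = c2"
proof -
  define dd where "dd = s0 * t1 - s1 * t0"
  have dd: "dd \<noteq> 0" using d dd_def by simp
  define n where "n = (0 * t1 - c2 * t0) * inverse dd"
  define r where "r = (s0 * c2 - s1 * 0) * inverse dd"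
  define l where "l = (c0 * t1 - c1 * t0) * inverse dd"
  define m where "m = (s0 * c1 - s1 * c0) * inverse dd"
  have di: "dd * inverse dd = 1" using dd by simp
  have "l * s0 + m * t0 = c0 * (dd * inverse dd)" unfolding l_def m_def dd_def by algebra
  then have e1: "l * s0 + m * t0 = c0" using di by simp
  have "l * s1 + m * t1 = c1 * (dd * inverse dd)" unfolding l_def m_def dd_def by algebra
  then have e2: "l * s1 + m * t1 = c1" using di by simp
  have e3: "n * s0 + r * t0 = 0" unfolding n_def r_def dd_def by algebra
  have "n * s1 + r * t1 = c2 * (dd * inverse dd)" unfolding n_def r_def dd_def by algebra
  then have e4: "n * s1 + r * t1 = c2" using di by simp
  show ?thesis
    apply (rule exI[of _ l], rule exI[of _ m], rule exI[of _ n], rule exI[of _ r])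
    using e1 e2 e3 e4 by (simp add: algebra_simps)
qed

lemma core2:
  fixes A0 A1 B0 B1 C0 C1 D0 D1 c0 c1 c2 :: complex
  assumes "A0*B1 - A1*B0 \<noteq> 0 \<or> A0*C1 - A1*C0 \<noteq> 0 \<or> A0*D1 - A1*D0 \<noteq> 0 \<or>
           B0*C1 - B1*C0 \<noteq> 0 \<or> B0*D1 - B1*D0 \<noteq> 0 \<or> C0*D1 - C1*D0 \<noteq> 0"
  shows "\<exists>\<alpha>1 \<beta>1 \<alpha>2 \<beta>2 \<alpha>3 \<beta>3 \<alpha>4 \<beta>4.
     \<alpha>1*A0 + \<alpha>2*B0 + \<alpha>3*C0 + \<alpha>4*D0 = c0 \<and>
     (\<alpha>1*A1 + \<beta>1*A0) + (\<alpha>2*B1 + \<beta>2*B0) + (\<alpha>3*C1 + \<beta>3*C0) + (\<alpha>4*D1 + \<beta>4*D0) = c1 \<and>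
     \<beta>1*A1 + \<beta>2*B1 + \<beta>3*C1 + \<beta>4*D1 = c2"
  using assms
proof (elim disjE)
  assume "A0*B1 - A1*B0 \<noteq> 0"
  from solve2[OF this, of c0 c1 c2] obtain l m n r where
    "l * A0 + m * B0 = c0 \<and> l * A1 + m * B1 + n * A0 + r * B0 = c1 \<and> n * A1 + r * B1 = c2" by blast
  note H = this
  show ?thesis
    apply (rule exI[of _ l], rule exI[of _ n], rule exI[of _ m], rule exI[of _ r], rule exI[of _ 0], rule exI[of _ 0], rule exI[of _ 0], rule exI[of _ 0])
    using H by (simp add: algebra_simps)
next
  assume "A0*C1 - A1*C0 \<noteq> 0"
  from solve2[OF this, of c0 c1 c2] obtain l m n r where
    "l * A0 + m * C0 = c0 \<and> l * A1 + m * C1 + n * A0 + r * C0 = c1 \<and> n * A1 + r * C1 = c2" by blast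
  note H = this
  show ?thesis
    apply (rule exI[of _ l], rule exI[of _ n], rule exI[of _ 0], rule exI[of _ 0], rule exI[of _ m], rule exI[of _ r], rule exI[of _ 0], rule exI[of _ 0])
    using H by (simp add: algebra_simps)
next
  assume "A0*D1 - A1*D0 \<noteq> 0"
  from solve2[OF this, of c0 c1 c2] obtain l m n r where
    "l * A0 + m * D0 = c0 \<and> l * A1 + m * D1 + n * A0 + r * D0 = c1 \<and> n * A1 + r * D1 = c2" by blast
  note H = this
  show ?thesis
    apply (rule exI[of _ l], rule exI[of _ n], rule exI[of _ 0], rule exI[of _ 0], rule exI[of _ 0], rule exI[of _ 0], rule exI[of _ m], rule exI[of _ r])
    using H by (simp add: algebra_simps)
next
  assume "B0*C1 - B1*C0 \<noteq> 0"
  from solve2[OF this, of c0 c1 c2] obtain l m n r where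
    "l * B0 + m * C0 = c0 \<and> l * B1 + m * C1 + n * B0 + r * C0 = c1 \<and> n * B1 + r * C1 = c2" by blast
  note H = this
  show ?thesis
    apply (rule exI[of _ 0], rule exI[of _ 0], rule exI[of _ l], rule exI[of _ n], rule exI[of _ m], rule exI[of _ r], rule exI[of _ 0], rule exI[of _ 0])
    using H by (simp add: algebra_simps)
next
  assume "B0*D1 - B1*D0 \<noteq> 0"
  from solve2[OF this, of c0 c1 c2] obtain l m n r where
    "l * B0 + m * D0 = c0 \<and> l * B1 + m * D1 + n * B0 + r * D0 = c1 \<and> n * B1 + r * D1 = c2" by blast
  note H = this
  show ?thesis
    apply (rule exI[of _ 0], rule exI[of _ 0], rule exI[of _ l], rule exI[of _ n], rule exI[of _ 0], rule exI[of _ 0], rule exI[of _ m], rule exI[of _ r])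
    using H by (simp add: algebra_simps)
next
  assume "C0*D1 - C1*D0 \<noteq> 0"
  from solve2[OF this, of c0 c1 c2] obtain l m n r where
    "l * C0 + m * D0 = c0 \<and> l * C1 + m * D1 + n * C0 + r * D0 = c1 \<and> n * C1 + r * D1 = c2" by blast
  note H = this
  show ?thesis
    apply (rule exI[of _ 0], rule exI[of _ 0], rule exI[of _ 0], rule exI[of _ 0], rule exI[of _ l], rule exI[of _ n], rule exI[of _ m], rule exI[of _ r])
    using H by (simp add: algebra_simps)
qed

definition mk :: "complex \<Rightarrow> complex \<Rightarrow> complex \<Rightarrow> complex \<Rightarrow> nat \<Rightarrow> complex" where
  "mk x0 x1 x2 x3 = (\<lambda>i. if i = 0 then x0 else if i = 1 then x1 else if i = 2 then x2 else if i = 3 then x3 else 0)"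

lemma mk_simps[simp]: "mk x0 x1 x2 x3 0 = x0" "mk x0 x1 x2 x3 1 = x1" "mk x0 x1 x2 x3 (Suc 0) = x1" "mk x0 x1 x2 x3 2 = x2"
  "mk x0 x1 x2 x3 3 = x3" "i \<ge> 4 \<Longrightarrow> mk x0 x1 x2 x3 i = 0"
  unfolding mk_def by auto

lemma lt4: "(i::nat) < 4 \<Longrightarrow> i = 0 \<or> i = 1 \<or> i = 2 \<or> i = 3" by arith

lemma core:
  fixes v w :: "nat \<Rightarrow> complex"
  assumes d0: "v 0 * w 2 - w 0 * v 2 = 0"
    and d1: "v 0 * w 3 - w 0 * v 3 + (v 1 * w 2 - w 1 * v 2) = 0"
    and d2: "v 1 * w 3 - w 1 * v 3 = 0"
    and nz: "wedge v w i j \<noteq> 0" "i < 4" "j < 4"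
  shows "\<exists>x y. (\<forall>i\<ge>4. x i = 0) \<and> (\<forall>i\<ge>4. y i = 0) \<and>
     wedge v y 0 2 + wedge x w 0 2 = c0 \<and>
     wedge v y 0 3 + wedge x w 0 3 + (wedge v y 1 2 + wedge x w 1 2) = c1 \<and>
     wedge v y 1 3 + wedge x w 1 3 = c2"
proof -
  have dets: "v 0 * v 3 - v 1 * v 2 \<noteq> 0 \<or> v 0 * w 1 - v 1 * w 0 \<noteq> 0 \<or> v 0 * w 3 - v 1 * w 2 \<noteq> 0 \<or>
           v 2 * w 1 - v 3 * w 0 \<noteq> 0 \<or> v 2 * w 3 - v 3 * w 2 \<noteq> 0 \<or> w 0 * w 3 - w 1 * w 2 \<noteq> 0"
  proof (rule ccontr)
    assume "\<not> ?thesis"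
    then have z: "v 0 * v 3 - v 1 * v 2 = 0" "v 0 * w 1 - v 1 * w 0 = 0" "v 0 * w 3 - v 1 * w 2 = 0"
           "v 2 * w 1 - v 3 * w 0 = 0" "v 2 * w 3 - v 3 * w 2 = 0" "w 0 * w 3 - w 1 * w 2 = 0" by auto
    have p03: "v 0 * w 3 - w 0 * v 3 = 0"
    proof -
      have "2 * (v 0 * w 3 - w 0 * v 3) = (v 0 * w 3 - w 0 * v 3 + (v 1 * w 2 - w 1 * v 2))
          + (v 0 * w 3 - v 1 * w 2) + (v 2 * w 1 - v 3 * w 0)" by (simp add: algebra_simps)
      also have "\<dots> = 0" by (simp only: d1 z(3) z(4)) simp
      finally show ?thesis by simp
    qed
    have p12: "v 1 * w 2 - w 1 * v 2 = 0" using d1 p03 by simp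
    have "wedge v w i j = 0"
      using lt4[OF nz(2)] lt4[OF nz(3)] z d0 d2 p03 p12
      by (auto simp: wedge_def algebra_simps)
    then show False using nz(1) by simp
  qed
  from core2[OF dets, of c0 c1 c2] obtain \<alpha>1 \<beta>1 \<alpha>2 \<beta>2 \<alpha>3 \<beta>3 \<alpha>4 \<beta>4 where
    e: "\<alpha>1* v 0 + \<alpha>2* v 2 + \<alpha>3* w 0 + \<alpha>4* w 2 = c0"
     "(\<alpha>1* v 1 + \<beta>1* v 0) + (\<alpha>2* v 3 + \<beta>2* v 2) + (\<alpha>3* w 1 + \<beta>3* w 0) + (\<alpha>4* w 3 + \<beta>4* w 2) = c1"
     "\<beta>1* v 1 + \<beta>2* v 3 + \<beta>3* w 1 + \<beta>4* w 3 = c2" by blast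
  show ?thesis
    apply (rule exI[of _ "mk \<alpha>4 \<beta>4 (-\<alpha>3) (-\<beta>3)"], rule exI[of _ "mk (-\<alpha>2) (-\<beta>2) \<alpha>1 \<beta>1"])
    using e by (auto simp: wedge_def algebra_simps)
qed


lemma coord_zero:
  assumes "s \<in> sections a b" "a + b + 2 \<le> i"
  shows "coord a s i = 0"
proof -
  have "degree (snd s) \<le> b" using assms(1) unfolding sections_def by auto
  then have "coeff (snd s) (i - (a + 1)) = 0" using assms(2) by (intro coeff_eq_0) auto
  then show ?thesis unfolding coord_def using assms(2) by auto
qed

lemma wedge2_E1: "M \<in> wedge2 a b \<Longrightarrow> M i j = - M j i"
  unfolding wedge2_def by blast

lemma wedge2_E2: "M \<in> wedge2 a b \<Longrightarrow> a + b + 2 \<le> i \<or> a + b + 2 \<le> j \<Longrightarrow> M i j = 0"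
  unfolding wedge2_def by blast

lemma wedge2_I: "(\<And>i j. M i j = - M j i) \<Longrightarrow> (\<And>i j. a + b + 2 \<le> i \<or> a + b + 2 \<le> j \<Longrightarrow> M i j = 0)
   \<Longrightarrow> M \<in> wedge2 a b"
  unfolding wedge2_def by blast

lemma wedge2_lin:
  assumes "x \<in> wedge2 a b" "y \<in> wedge2 a b"
  shows "(\<lambda>i j. c * x i j + d * y i j) \<in> wedge2 a b"
proof (rule wedge2_I)
  fix i j
  show "c * x i j + d * y i j = - (c * x j i + d * y j i)"
    using wedge2_E1[OF assms(1), of i j] wedge2_E1[OF assms(2), of i j] by (simp add: algebra_simps)
next
  fix i j assume h: "a + b + 2 \<le> i \<or> a + b + 2 \<le> j"
  show "c * x i j + d * y i j = 0"
    using wedge2_E2[OF assms(1) h] wedge2_E2[OF assms(2) h] by simp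
qed

lemma gr_sub: "gr_cone a b \<subseteq> wedge2 a b"
proof
  fix M assume "M \<in> gr_cone a b"
  then obtain s t where st: "s \<in> sections a b" "t \<in> sections a b" "M = wedge (coord a s) (coord a t)"
    unfolding gr_cone_def by blast
  show "M \<in> wedge2 a b" unfolding wedge2_def st(3) wedge_def
    using coord_zero[OF st(1)] coord_zero[OF st(2)] by auto
qed

lemma K_sub: "K_perp a b \<subseteq> wedge2 a b" unfolding K_perp_def by auto

lemma vec_sec11:
  assumes "\<forall>i\<ge>4. u i = 0"
  shows "([:u 0, u 1:], [:u 2, u 3:]) \<in> sections 1 1" "coord 1 ([:u 0, u 1:], [:u 2, u 3:]) = u"
proof -
  show "([:u 0, u 1:], [:u 2, u 3:]) \<in> sections 1 1" unfolding sections_def by auto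
  show "coord 1 ([:u 0, u 1:], [:u 2, u 3:]) = u"
  proof
    fix i :: nat
    consider "i = 0" | "i = 1" | "i = 2" | "i = 3" | "i \<ge> 4" by arith
    then show "coord 1 ([:u 0, u 1:], [:u 2, u 3:]) i = u i"
    proof cases
      case 5
      have dg: "degree [:u 2, u 3:] \<le> 1" by (rule order.trans[OF degree_pCons_le]) simp
      have "coeff [:u 2, u 3:] (i - (1 + 1)) = 0" by (rule coeff_eq_0) (use 5 dg in linarith)
      moreover have "\<not> i \<le> 1" using 5 by simp
      ultimately show ?thesis using 5 assms unfolding coord_def by simp
    qed (auto simp: coord_def numeral_2_eq_2 numeral_3_eq_3)
  qed
qed

lemma wedge_ev_wedge2:
  "i < a + b + 2 \<Longrightarrow> j < a + b + 2 \<Longrightarrow> wedge (ev i) (ev j) \<in> wedge2 a b"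
  unfolding wedge2_def wedge_def ev_def by auto

lemma nontrans:
  assumes p: "wedge (ev i) (ev j) \<in> gr_cone a b \<inter> K_perp a b"
    and d: "i \<noteq> j" "i \<noteq> a" "i \<noteq> a + 1 + b" "j \<noteq> a" "j \<noteq> a + 1 + b"
    and T: "transversal_Gr_K a b"
  shows False
proof -
  have pnz: "wedge (ev i) (ev j) \<noteq> (\<lambda>i j. 0)"
  proof
    assume "wedge (ev i) (ev j) = (\<lambda>i j. 0)"
    then have "wedge (ev i) (ev j) i j = 0" by simp
    then show False using d(1) unfolding wedge_def ev_def by simp
  qed
  have N: "wedge (ev a) (ev (a + 1 + b)) \<in> wedge2 a b" by (rule wedge_ev_wedge2) auto
  from T p pnz N obtain x y where xy: "wedge (ev a) (ev (a + 1 + b)) = (\<lambda>i j. x i j + y i j)"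
    "x \<in> tangent_space (gr_cone a b) (wedge (ev i) (ev j))"
    "y \<in> tangent_space (K_perp a b) (wedge (ev i) (ev j))"
    unfolding transversal_Gr_K_def by blast
  have x0: "x a (a + 1 + b) = 0" by (rule tangent_pluecker[OF xy(2)]) (use d in auto)
  have y0: "y a (a + 1 + b) = 0"
  proof (rule tangent_const0[OF xy(3)])
    fix M assume "M \<in> K_perp a b"
    then have "detmap a b M (a + b) = 0" unfolding K_perp_def by auto
    then show "M a (a + 1 + b) = 0" using detmap_top by metis
  qed
  have "wedge (ev a) (ev (a + 1 + b)) a (a + 1 + b) = 1" unfolding wedge_def ev_def by simp
  then show False using xy(1) x0 y0 by (metis add.right_neutral zero_neq_one)
qed

lemma ev_coord1:
  assumes "1 \<le> a"
  shows "coord a ([:1:], 0) = ev 0" "coord a ([:0, 1:], 0) = ev 1"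
    "coord a (0, [:1:]) = ev (a + 1)" "coord a (0, [:0, 1:]) = ev (a + 2)"
proof -
  show "coord a ([:1:], 0) = ev 0"
    unfolding coord_def ev_def by (auto simp: coeff_pCons split: nat.split)
  show "coord a ([:0, 1:], 0) = ev 1"
    using assms unfolding coord_def ev_def by (auto simp: coeff_pCons split: nat.split)
  show "coord a (0, [:1:]) = ev (a + 1)"
  proof
    fix i show "coord a (0, [:1:]) i = ev (a + 1) i"
      unfolding coord_def ev_def by (cases "i - (a + 1)") (auto simp: coeff_pCons)
  qed
  show "coord a (0, [:0, 1:]) = ev (a + 2)"
  proof
    fix i show "coord a (0, [:0, 1:]) i = ev (a + 2) i"
      unfolding coord_def ev_def
      by (cases "i - (a + 1)"; cases "i - (a + 2)") (auto simp: coeff_pCons split: nat.split)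
  qed
qed

lemma only_if:
  assumes "1 \<le> a" "1 \<le> b" "transversal_Gr_K a b"
  shows "a = 1 \<and> b = 1"
proof (rule ccontr)
  assume "\<not> (a = 1 \<and> b = 1)"
  then have "2 \<le> a \<or> 2 \<le> b" using assms by auto
  then show False
  proof
    assume a2: "2 \<le> a"
    have g: "wedge (ev 0) (ev 1) \<in> gr_cone a b"
      unfolding gr_cone_def sections_def
      apply (rule CollectI, rule exI[of _ "([:1:], 0)"], rule exI[of _ "([:0, 1:], 0)"])
      using assms ev_coord1[OF assms(1)] by auto
    have k: "wedge (ev 0) (ev 1) \<in> K_perp a b"
      unfolding K_perp_def
    proof (intro CollectI conjI allI)
      show "wedge (ev 0) (ev 1) \<in> wedge2 a b" by (rule wedge_ev_wedge2) auto
      fix k show "detmap a b (wedge (ev 0) (ev 1)) k = 0"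
        unfolding detmap_def wedge_def ev_def by (intro sum.neutral ballI) (use assms in auto)
    qed
    show False by (rule nontrans[OF _ _ _ _ _ _ assms(3), of 0 1]) (use g k a2 in auto)
  next
    assume b2: "2 \<le> b"
    have g: "wedge (ev (a + 1)) (ev (a + 2)) \<in> gr_cone a b"
      unfolding gr_cone_def sections_def
      apply (rule CollectI, rule exI[of _ "(0, [:1:])"], rule exI[of _ "(0, [:0, 1:])"])
      using assms ev_coord1[OF assms(1)] by auto
    have k: "wedge (ev (a + 1)) (ev (a + 2)) \<in> K_perp a b"
      unfolding K_perp_def
    proof (intro CollectI conjI allI)
      show "wedge (ev (a + 1)) (ev (a + 2)) \<in> wedge2 a b" by (rule wedge_ev_wedge2) (use assms in auto)
      fix k show "detmap a b (wedge (ev (a + 1)) (ev (a + 2))) k = 0"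
        unfolding detmap_def wedge_def ev_def by (intro sum.neutral ballI) (use assms in auto)
    qed
    show False by (rule nontrans[OF _ _ _ _ _ _ assms(3), of "a + 1" "a + 2"]) (use g k b2 in auto)
  qed
qed


lemma if_dir: "transversal_Gr_K 1 1"
  unfolding transversal_Gr_K_def
proof (intro ballI impI)
  fix p assume pK: "p \<in> gr_cone 1 1 \<inter> K_perp 1 1" and pnz: "p \<noteq> (\<lambda>i j. 0)"
  let ?S = "{(\<lambda>i j. x i j + y i j) | x y. x \<in> tangent_space (gr_cone 1 1) p \<and> y \<in> tangent_space (K_perp 1 1) p}"
  show "?S = wedge2 1 1"
  proof
    show "?S \<subseteq> wedge2 1 1"
    proof
      fix M assume "M \<in> ?S"
      then have "\<exists>x y. M = (\<lambda>i j. x i j + y i j) \<and> x \<in> tangent_space (gr_cone 1 1) p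
        \<and> y \<in> tangent_space (K_perp 1 1) p" by (simp only: mem_Collect_eq)
      then obtain x y where xy: "M = (\<lambda>i j. x i j + y i j)" "x \<in> tangent_space (gr_cone 1 1) p"
        "y \<in> tangent_space (K_perp 1 1) p" by (elim exE conjE) simp
      have "x \<in> wedge2 1 1" by (rule tangent_wedge2[OF xy(2) gr_sub])
      moreover have "y \<in> wedge2 1 1" by (rule tangent_wedge2[OF xy(3) K_sub])
      ultimately have "(\<lambda>i j. 1 * x i j + 1 * y i j) \<in> wedge2 1 1" by (rule wedge2_lin)
      then show "M \<in> wedge2 1 1" unfolding xy(1) by simp
    qed
  next
    show "wedge2 1 1 \<subseteq> ?S"
    proof
      fix N assume N: "N \<in> wedge2 1 1"
      have "p \<in> gr_cone 1 1" using pK by simp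
      then have "\<exists>s t. p = wedge (coord 1 s) (coord 1 t) \<and> s \<in> sections 1 1 \<and> t \<in> sections 1 1"
        unfolding gr_cone_def by (simp only: mem_Collect_eq)
      then obtain s t where st: "s \<in> sections 1 1" "t \<in> sections 1 1"
        "p = wedge (coord 1 s) (coord 1 t)" by (elim exE conjE) simp
      define v where "v = coord 1 s"
      define w where "w = coord 1 t"
      have vz: "\<forall>i\<ge>4. v i = 0" unfolding v_def using coord_zero[OF st(1)] by simp
      have wz: "\<forall>i\<ge>4. w i = 0" unfolding w_def using coord_zero[OF st(2)] by simp
      have p: "p = wedge v w" using st(3) v_def w_def by simp
      have pdet: "detmap 1 1 p k = 0" for k using pK unfolding K_perp_def by auto
      have d0: "v 0 * w 2 - w 0 * v 2 = 0" using pdet[of 0] unfolding detmap11 p wedge_def by simp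
      have d1: "v 0 * w 3 - w 0 * v 3 + (v 1 * w 2 - w 1 * v 2) = 0"
        using pdet[of 1] unfolding detmap11 p wedge_def by simp
      have d2: "v 1 * w 3 - w 1 * v 3 = 0" using pdet[of 2] unfolding detmap11 p wedge_def by simp
      have "\<exists>i j. p i j \<noteq> 0"
      proof (rule ccontr)
        assume "\<not> (\<exists>i j. p i j \<noteq> 0)"
        then have "p = (\<lambda>i j. 0)" by (intro ext) simp
        then show False using pnz by simp
      qed
      then obtain i j where ij: "p i j \<noteq> 0" by (elim exE)
      have pw: "p \<in> wedge2 1 1" using pK K_sub by blast
      have "i < 4"
      proof (rule ccontr)
        assume "\<not> i < 4"
        then have "1 + 1 + 2 \<le> i \<or> 1 + 1 + 2 \<le> j" by simp
        then show False using wedge2_E2[OF pw] ij by blast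
      qed
      have "j < 4"
      proof (rule ccontr)
        assume "\<not> j < 4"
        then have "1 + 1 + 2 \<le> i \<or> 1 + 1 + 2 \<le> j" by simp
        then show False using wedge2_E2[OF pw] ij by blast
      qed
      have ij': "wedge v w i j \<noteq> 0" using ij p by simp
      obtain x y where xy: "\<forall>i\<ge>4. x i = 0" "\<forall>i\<ge>4. y i = 0"
        "wedge v y 0 2 + wedge x w 0 2 = detmap 1 1 N 0"
        "wedge v y 0 3 + wedge x w 0 3 + (wedge v y 1 2 + wedge x w 1 2) = detmap 1 1 N 1"
        "wedge v y 1 3 + wedge x w 1 3 = detmap 1 1 N 2"
        using core[OF d0 d1 d2 ij' \<open>i < 4\<close> \<open>j < 4\<close>, of "detmap 1 1 N 0" "detmap 1 1 N 1" "detmap 1 1 N 2"] by blast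
      define X where "X = (\<lambda>i j. wedge v y i j + wedge x w i j)"
      define Y where "Y = (\<lambda>i j. N i j - X i j)"
      have Xt: "X \<in> tangent_space (gr_cone 1 1) p"
        unfolding tangent_space_def
      proof (intro CollectI exI[of _ "\<lambda>\<tau>. wedge (\<lambda>i. v i + \<tau> * x i) (\<lambda>i. w i + \<tau> * y i)"] conjI allI)
        show "wedge (\<lambda>i. v i + 0 * x i) (\<lambda>i. w i + 0 * y i) = p" using p by simp
      next
        fix \<tau> :: complex
        have u1: "\<forall>i\<ge>4. v i + \<tau> * x i = 0" using vz xy(1) by simp
        have u2: "\<forall>i\<ge>4. w i + \<tau> * y i = 0" using wz xy(2) by simp
        show "wedge (\<lambda>i. v i + \<tau> * x i) (\<lambda>i. w i + \<tau> * y i) \<in> gr_cone 1 1"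
          unfolding gr_cone_def mem_Collect_eq
          apply (rule exI[of _ "([:v 0 + \<tau> * x 0, v 1 + \<tau> * x 1:], [:v 2 + \<tau> * x 2, v 3 + \<tau> * x 3:])"])
          apply (rule exI[of _ "([:w 0 + \<tau> * y 0, w 1 + \<tau> * y 1:], [:w 2 + \<tau> * y 2, w 3 + \<tau> * y 3:])"])
          using vec_sec11[OF u1] vec_sec11[OF u2] by simp
      next
        fix i j
        show "((\<lambda>\<tau>. wedge (\<lambda>i. v i + \<tau> * x i) (\<lambda>i. w i + \<tau> * y i) i j) has_field_derivative X i j) (at 0)"
          unfolding wedge_def X_def
          by (auto intro!: derivative_eq_intros simp: algebra_simps)
      qed
      have Xw: "X \<in> wedge2 1 1" by (rule tangent_wedge2[OF Xt gr_sub])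
      have "(\<lambda>i j. 1 * N i j + (-1) * X i j) \<in> wedge2 1 1" using N Xw by (rule wedge2_lin)
      then have Yw: "Y \<in> wedge2 1 1" unfolding Y_def by simp
      have Ydet: "detmap 1 1 Y k = 0" for k
        using xy(3-5) unfolding detmap11 Y_def X_def by (auto simp: algebra_simps)
      have Yt: "Y \<in> tangent_space (K_perp 1 1) p"
        unfolding tangent_space_def
      proof (intro CollectI exI[of _ "\<lambda>\<tau> i j. p i j + \<tau> * Y i j"] conjI allI)
        show "(\<lambda>i j. p i j + 0 * Y i j) = p" by simp
      next
        fix \<tau> :: complex
        show "(\<lambda>i j. p i j + \<tau> * Y i j) \<in> K_perp 1 1"
          unfolding K_perp_def
        proof (intro CollectI conjI allI)
          have "(\<lambda>i j. 1 * p i j + \<tau> * Y i j) \<in> wedge2 1 1" using pw Yw by (rule wedge2_lin)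
          then show "(\<lambda>i j. p i j + \<tau> * Y i j) \<in> wedge2 1 1" by simp
          fix k
          have "detmap 1 1 (\<lambda>i j. p i j + \<tau> * Y i j) k = detmap 1 1 p k + \<tau> * detmap 1 1 Y k"
            unfolding detmap11 by (auto simp: algebra_simps)
          then show "detmap 1 1 (\<lambda>i j. p i j + \<tau> * Y i j) k = 0" using pdet Ydet by simp
        qed
      next
        fix i j
        show "((\<lambda>\<tau>. p i j + \<tau> * Y i j) has_field_derivative Y i j) (at 0)"
          by (auto intro!: derivative_eq_intros)
      qed
      have NXY: "N = (\<lambda>i j. X i j + Y i j)" unfolding Y_def by simp
      show "N \<in> ?S" unfolding mem_Collect_eq
        by (rule exI[of _ X], rule exI[of _ Y]) (use Xt Yt NXY in simp)
    qed
  qed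
qed

theorem proposition5p6:
  fixes a b :: nat
  assumes "1 \<le> a" and "1 \<le> b"
  shows "transversal_Gr_K a b \<longleftrightarrow> (a = 1 \<and> b = 1)"
  using only_if[OF assms] if_dir by blast

end
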